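(* For every integer $\alpha\ge2$ and every integer $k>3$, $$2k^2-2k\le N_\alpha(k,k)\le (k^3-k^2+k)\binom{k}{2}.$$
   Context: A $k$-power is a word $u^k$ ($k$ concatenated copies of $u$) for a nonempty word $u$. A $k$-anti-power is a word $w=w_1\cdots w_k$ with $|w_1|=\cdots=|w_k|$ and $w_1,\dots,w_k$ pairwise distinct. $N_\alpha(k,k)$ is the smallest positive integer $N$ such that every word of length $N$ over an alphabet of size $\alpha$ contains a factor (contiguous subword) that is a $k$-power or a $k$-anti-power. *)

theory Defs
  imports Main
begin

definition is_factor :: "'a list \<Rightarrow> 'a list \<Rightarrow> bool" where
  "is_factor v w \<longleftrightarrow> (\<exists>x y. w = x @ v @ y)"

definition is_k_power :: "nat \<Rightarrow> 'a list \<Rightarrow> bool" where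
  "is_k_power k w \<longleftrightarrow> (\<exists>u. u \<noteq> [] \<and> w = concat (replicate k u))"

definition is_k_anti_power :: "nat \<Rightarrow> 'a list \<Rightarrow> bool" where
  "is_k_anti_power k w \<longleftrightarrow> (\<exists>m. length w = k * m \<and>
     (\<forall>i<k. \<forall>j<k. i \<noteq> j \<longrightarrow> take m (drop (i*m) w) \<noteq> take m (drop (j*m) w)))"

definition good_length :: "nat \<Rightarrow> nat \<Rightarrow> nat \<Rightarrow> bool" where
  "good_length alpha k N \<longleftrightarrow> (\<forall>w::nat list. length w = N \<longrightarrow> set w \<subseteq> {0..<alpha} \<longrightarrow>
     (\<exists>v. is_factor v w \<and> (is_k_power k v \<or> is_k_anti_power k v)))"

definition N_alpha :: "nat \<Rightarrow> nat \<Rightarrow> nat" where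
  "N_alpha alpha k = (LEAST N. N > 0 \<and> good_length alpha k N)"

end

theory Submission
  imports Defs
begin


lemma concat_replicate_nth:
  assumes "q < k * length u"
  shows "concat (replicate k u) ! q = u ! (q mod length u)"
  using assms
proof (induction k arbitrary: q)
  case 0 then show ?case by simp
next
  case (Suc k)
  show ?case
  proof (cases "q < length u")
    case True then show ?thesis by (simp add: nth_append)
  next
    case False
    then have "q - length u < k * length u" using Suc.prems by simp
    then have "concat (replicate k u) ! (q - length u) = u ! ((q - length u) mod length u)"
      using Suc.IH by blast
    moreover have "(q - length u) mod length u = q mod length u"
      using False by (simp add: le_mod_geq)
    ultimately show ?thesis using False by (simp add: nth_append)
  qed
qed

lemma length_concat_replicate: "length (concat (replicate k u)) = k * length u"
  by (induction k) auto

lemma periodic_mod: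
  fixes f :: "nat \<Rightarrow> 'a" and a p q L :: nat
  assumes per: "\<And>t. t + p < L \<Longrightarrow> f (a + t) = f (a + t + p)"
    and p: "0 < p"
  shows "q < L \<Longrightarrow> f (a + q) = f (a + q mod p)"
proof (induction q rule: less_induct)
  case (less q)
  show ?case
  proof (cases "q < p")
    case True then show ?thesis by simp
  next
    case False
    then have "q - p < q" using p by simp
    then have "f (a + (q - p)) = f (a + (q - p) mod p)" using less by simp
    moreover have "(q - p) mod p = q mod p" using False by (simp add: le_mod_geq)
    moreover have "f (a + (q - p)) = f (a + (q - p) + p)" using per[of "q - p"] False less.prems by simp
    ultimately show ?thesis using False by simp
  qed
qed

lemma factor_nth:
  assumes "is_factor v w"
  shows "\<exists>s. s + length v \<le> length w \<and> (\<forall>q < length v. v ! q = w ! (s + q))"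
proof -
  obtain x y where "w = x @ v @ y" using assms unfolding is_factor_def by blast
  then show ?thesis by (intro exI[of _ "length x"]) (auto simp: nth_append)
qed

lemma block_nth:
  assumes "(i+1)*m \<le> length v" "q < m"
  shows "take m (drop (i*m) v) ! q = v ! (i*m + q)"
  using assms by (simp add: algebra_simps)

lemma block_length:
  assumes "(i+1)*m \<le> length v"
  shows "length (take m (drop (i*m) v)) = m"
  using assms by (simp add: algebra_simps)



lemma power_from_two:
  fixes w :: "'a list"
  assumes ij: "i < j" "j < k" and mm: "m < m'"
    and bnd: "(m' - m) * i + (k-1) * ((j-i) * (m' - m)) \<le> m"
    and len: "k*m' \<le> length w"
    and E1: "\<forall>t<m. w!(i*m+t) = w!(j*m+t)"
    and E2: "\<forall>t<m'. w!(i*m'+t) = w!(j*m'+t)"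
  shows "\<exists>v. is_factor v w \<and> is_k_power k v"
proof -
  define e where "e = m' - m"
  define d where "d = j - i"
  define p where "p = d * e"
  define a where "a = j*m + i*e"
  have e0: "0 < e" using mm e_def by simp
  have d0: "0 < d" using ij d_def by simp
  have p0: "0 < p" using e0 d0 p_def by simp
  have m'eq: "m' = m + e" using mm e_def by simp
  have jeq: "j = i + d" using ij d_def by simp
  have bnd': "i*e + (k-1)*p \<le> m" using bnd e_def d_def p_def by (simp add: mult.commute)
  have per: "w!(a+t) = w!(a+t+p)" if t: "t + p < a + k*p - a" for t
  proof -
    have kp: "k*p = (k-1)*p + p" using ij by (cases k) auto
    have tlt: "t < (k-1)*p" using t kp by simp
    have "i*e + t < m" using tlt bnd' by simp
    then have 1: "w!(i*m + (i*e+t)) = w!(j*m + (i*e+t))" using E1 by blast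
    have "t < m'" using tlt bnd' mm by simp
    then have 2: "w!(i*m'+t) = w!(j*m'+t)" using E2 by blast
    have q1: "i*m' + t = i*m + (i*e+t)" using m'eq by (simp add: algebra_simps)
    have q2: "j*m + (i*e+t) = a + t" using a_def by simp
    have q3: "j*m'+t = a + t + p" using m'eq jeq a_def p_def by (simp add: algebra_simps)
    show ?thesis using 1 2 unfolding q1 q2 q3 by simp
  qed
  have kp: "k*p = (k-1)*p + p" using ij by (cases k) auto
  have "a + k*p = j*m + (i*e + (k-1)*p) + p" using kp a_def by simp
  then have "a + k*p \<le> j*m + m + d*e" using bnd' p_def by linarith
  also have "\<dots> \<le> j*m + j*e + m" using jeq mult_le_mono1[of d j e] by simp
  also have "\<dots> \<le> (j+1)*m'" using m'eq by (simp add: algebra_simps)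
  also have "\<dots> \<le> k*m'" using ij mult_le_mono1[of "j+1" k m'] by simp
  finally have alen: "a + k*p \<le> length w" using len by simp
  define u where "u = take p (drop a w)"
  define v where "v = take (k*p) (drop a w)"
  have lu: "length u = p" using u_def alen kp p0 by auto
  have lv: "length v = k*p" using v_def alen by auto
  have "v = concat (replicate k u)"
  proof (rule nth_equalityI)
    show "length v = length (concat (replicate k u))" using lv lu length_concat_replicate by metis
  next
    fix q assume q: "q < length v"
    have "v ! q = w ! (a + q)" using q lv v_def alen by simp
    also have "\<dots> = w ! (a + q mod p)"
      using periodic_mod[of p "a + k*p - a" "\<lambda>x. w!x" a q] per p0 q lv by simp
    also have "\<dots> = u ! (q mod p)" using u_def p0 alen lu by simp
    also have "\<dots> = concat (replicate k u) ! q" using concat_replicate_nth[of q k u] q lv lu by simp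
    finally show "v ! q = concat (replicate k u) ! q" .
  qed
  moreover have "u \<noteq> []" using lu p0 by auto
  ultimately have "is_k_power k v" unfolding is_k_power_def by blast
  moreover have "is_factor v w"
  proof -
    have "w = take a w @ v @ drop (k*p) (drop a w)" unfolding v_def
      by (metis append_take_drop_id)
    then show ?thesis unfolding is_factor_def by blast
  qed
  ultimately show ?thesis by blast
qed



lemma card_pairs_le: "card {(i,j). i < j \<and> j < (k::nat)} \<le> k choose 2"
proof -
  let ?P = "{(i,j). i < j \<and> j < (k::nat)}"
  let ?f = "\<lambda>(i,j). {i,j::nat}"
  have fin: "finite ?P" by (rule finite_subset[of _ "{..<k} \<times> {..<k}"]) auto
  have inj: "inj_on ?f ?P"
    by (auto simp: inj_on_def doubleton_eq_iff)
  have sub: "?f ` ?P \<subseteq> {B. B \<subseteq> {..<k} \<and> card B = 2}" by auto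
  have "card ?P = card (?f ` ?P)" using card_image[OF inj] by simp
  also have "\<dots> \<le> card {B. B \<subseteq> {..<k} \<and> card B = 2}"
    by (rule card_mono[OF _ sub]) simp
  also have "\<dots> = k choose 2" using n_subsets[of "{..<k}" 2] by simp
  finally show ?thesis .
qed

lemma upper_good:
  assumes k: "2 \<le> k"
  shows "good_length alpha k ((k^3 - k^2 + k) * (k choose 2))"
  unfolding good_length_def
proof (intro allI impI)
  fix w :: "nat list"
  define c where "c = k choose 2"
  define M0 where "M0 = c * (k*k - k)"
  assume lenw: "length w = (k^3 - k^2 + k) * (k choose 2)"
  have N0: "(k^3 - k^2 + k) * c = k * (M0 + c)"
  proof -
    have "k^3 - k^2 = k * (k*k - k)" by (simp add: power3_eq_cube power2_eq_square algebra_simps)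
    then show ?thesis unfolding M0_def by (simp add: algebra_simps)
  qed
  have len: "length w = k * (M0 + c)" using lenw N0 c_def by simp
  show "\<exists>v. is_factor v w \<and> (is_k_power k v \<or> is_k_anti_power k v)"
  proof (rule ccontr)
    assume H: "\<not> (\<exists>v. is_factor v w \<and> (is_k_power k v \<or> is_k_anti_power k v))"
    define D where "D = {M0..M0+c}"
    have ex: "\<forall>m\<in>D. \<exists>ij. fst ij < snd ij \<and> snd ij < k \<and>
                 (\<forall>t<m. w!(fst ij*m+t) = w!(snd ij*m+t))"
    proof
      fix m assume mD: "m \<in> D"
      let ?v = "take (k*m) w"
      have km: "k*m \<le> length w" using mD len D_def by simp
      have fac: "is_factor ?v w" unfolding is_factor_def
        by (metis append_Nil append_take_drop_id)
      then have "\<not> is_k_anti_power k ?v" using H by blast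
      moreover have lv: "length ?v = k*m" using km by simp
      ultimately obtain i j where ij: "i < k" "j < k" "i \<noteq> j"
        and eq: "take m (drop (i*m) ?v) = take m (drop (j*m) ?v)"
        unfolding is_k_anti_power_def by blast
      have E: "\<forall>t<m. w!(i*m+t) = w!(j*m+t)"
      proof (intro allI impI)
        fix t assume t: "t < m"
        have bi: "(i+1)*m \<le> length ?v" using ij lv mult_le_mono1[of "i+1" k m] by simp
        have bj: "(j+1)*m \<le> length ?v" using ij lv mult_le_mono1[of "j+1" k m] by simp
        have "?v ! (i*m+t) = ?v ! (j*m+t)"
          using block_nth[OF bi t] block_nth[OF bj t] eq by simp
        moreover have "i*m+t < k*m" using bi t lv by simp
        moreover have "j*m+t < k*m" using bj t lv by simp
        ultimately show "w!(i*m+t) = w!(j*m+t)" by simp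
      qed
      show "\<exists>ij. fst ij < snd ij \<and> snd ij < k \<and> (\<forall>t<m. w!(fst ij*m+t) = w!(snd ij*m+t))"
      proof (cases "i < j")
        case True then show ?thesis using ij E by (intro exI[of _ "(i,j)"]) auto
      next
        case False then show ?thesis using ij E by (intro exI[of _ "(j,i)"]) auto
      qed
    qed
    from bchoice[OF ex] obtain f where f: "\<forall>m\<in>D. fst (f m) < snd (f m) \<and> snd (f m) < k \<and>
                 (\<forall>t<m. w!(fst (f m)*m+t) = w!(snd (f m)*m+t))"
      by blast
    have sub: "f ` D \<subseteq> {(i,j). i < j \<and> j < k}"
    proof
      fix x assume "x \<in> f ` D"
      then obtain m where "m \<in> D" "x = f m" by blast
      then have "fst x < snd x \<and> snd x < k" using f by blast
      then show "x \<in> {(i,j). i < j \<and> j < k}" by (cases x) simp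
    qed
    have finP: "finite {(i,j). i < j \<and> j < (k::nat)}"
      by (rule finite_subset[of _ "{..<k} \<times> {..<k}"]) auto
    have "card (f ` D) \<le> c" using card_mono[OF finP sub] card_pairs_le[of k] c_def by simp
    moreover have "card D = c + 1" using D_def by simp
    ultimately have "\<not> inj_on f D" using pigeonhole[of f D] by simp
    then obtain m1 m2 where m12: "m1 \<in> D" "m2 \<in> D" "m1 \<noteq> m2" "f m1 = f m2"
      by (auto simp: inj_on_def)
    obtain m m' where mm: "m \<in> D" "m' \<in> D" "m < m'" "f m = f m'"
    proof (cases "m1 < m2")
      case True then show ?thesis using m12 that by blast
    next
      case False then have "m2 < m1" using m12 by simp
      then show ?thesis using m12 that[of m2 m1] by simp
    qed
    obtain i j where fij: "f m = (i,j)" by (cases "f m") auto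
    have fm: "fst (f m) < snd (f m) \<and> snd (f m) < k \<and> (\<forall>t<m. w!(fst (f m)*m+t) = w!(snd (f m)*m+t))"
      using f mm(1) by blast
    have fm': "(\<forall>t<m'. w!(fst (f m')*m'+t) = w!(snd (f m')*m'+t))"
      using f mm(2) by blast
    have ij: "i < j" "j < k" using fm fij by simp_all
    have E1: "\<forall>t<m. w!(i*m+t) = w!(j*m+t)" using fm fij by simp
    have E2: "\<forall>t<m'. w!(i*m'+t) = w!(j*m'+t)" using fm' fij mm(4) by simp
    have e: "m' - m \<le> c" using mm D_def by auto
    have "i + (k-1)*(j-i) \<le> k*k - k"
    proof -
      have k1: "k - 1 = Suc (k-2)" using k by simp
      have "i + (k-1)*(j-i) = i + (j-i) + (k-2)*(j-i)" unfolding k1 by simp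
      also have "\<dots> = j + (k-2)*(j-i)" using ij by simp
      finally have "i + (k-1)*(j-i) = j + (k-2)*(j-i)" .
      also have "\<dots> \<le> (k-1) + (k-2)*(k-1)" using ij
        by (intro add_mono mult_le_mono2) auto
      also have "\<dots> = (k-1)*(k-1)" using k by (cases k) (auto simp: algebra_simps)
      also have "\<dots> \<le> k*(k-1)" by simp
      also have "\<dots> = k*k - k" by (simp add: diff_mult_distrib2)
      finally show ?thesis .
    qed
    then have "(m' - m) * (i + (k-1)*(j-i)) \<le> c * (k*k-k)"
      using e by (intro mult_le_mono) auto
    moreover have "(m' - m) * i + (k-1) * ((j-i) * (m' - m)) = (m' - m) * (i + (k-1)*(j-i))"
      by (simp only: distrib_left mult.commute mult.left_commute)
    moreover have "c * (k*k-k) \<le> m" using mm D_def M0_def by simp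
    ultimately have bnd: "(m' - m) * i + (k-1) * ((j-i) * (m' - m)) \<le> m"
      by linarith
    have "k*m' \<le> length w" using mm len D_def by simp
    then obtain v where "is_factor v w" "is_k_power k v"
      using power_from_two[OF ij mm(3) bnd _ E1 E2] by blast
    then show False using H by blast
  qed
qed



definition xz :: "nat \<Rightarrow> nat" where "xz k = k*k - k - 1"

definition Wf :: "nat \<Rightarrow> nat \<Rightarrow> nat" where
  "Wf k x = (if (x < xz k \<and> k dvd x) \<or> x = xz k \<or> (xz k < x \<and> k dvd (x+2)) then 1 else 0)"

lemma mult_between:
  fixes k y a :: nat
  assumes "k dvd y" "k*a < y" "y < k*(a+1)"
  shows False
proof -
  obtain q where y: "y = k*q" using assms(1) by blast
  have "a < q" using assms(2) y by (metis mult_less_cancel1)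
  moreover have "q < a+1" using assms(3) y by (metis mult_less_cancel1)
  ultimately show False by simp
qed

lemma mult_between2:
  fixes k y a :: nat
  assumes "k dvd y" "k*a < y" "y < k*(a+2)"
  shows "y = k*(a+1)"
proof -
  obtain q where y: "y = k*q" using assms(1) by blast
  have "a < q" using assms(2) y by (metis mult_less_cancel1)
  moreover have "q < a+2" using assms(3) y by (metis mult_less_cancel1)
  ultimately have "q = a+1" by simp
  then show ?thesis using y by simp
qed

lemma mult_window:
  fixes k a :: nat assumes "0 < k"
  shows "\<exists>q. a \<le> k*q \<and> k*q < a + k"
proof (cases "a mod k = 0")
  case True
  then have "k * (a div k) = a" by (metis add_0_right div_mult_mod_eq mult.commute)
  then show ?thesis using assms by (intro exI[of _ "a div k"]) simp
next
  case False
  have e: "k * (a div k) + a mod k = a" by (metis div_mult_mod_eq mult.commute)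
  have "a mod k < k" using assms by simp
  moreover have "k * (a div k + 1) = k * (a div k) + k" by simp
  ultimately have "a \<le> k * (a div k + 1)" "k * (a div k + 1) < a + k" using e False by linarith+
  then show ?thesis by blast
qed

lemma Wf01: "Wf k x \<noteq> 1 \<Longrightarrow> Wf k x = 0"
  unfolding Wf_def by (auto split: if_splits)

context
  fixes k :: nat
  assumes k4: "4 \<le> k"
begin

abbreviation "X \<equiv> xz k"

lemma Fk: "4*k \<le> k*k" using k4 by simp

lemma F1: "X + 1 = k*(k-1)"
proof -
  have a: "k*(k-1) = k*k - k" by (simp add: diff_mult_distrib2)
  have b: "k*k - k \<ge> 1" using Fk k4 by linarith
  show ?thesis unfolding xz_def a using b by simp
qed

lemma F2: "k*(k-1) = k*(k-2) + k"
proof -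
  have "k - 1 = (k-2) + 1" using k4 by simp
  then show ?thesis by (metis add.commute distrib_left mult.right_neutral)
qed

lemma F3: "k*(k-2) = k*(k-3) + k"
proof -
  have "k - 2 = (k-3) + 1" using k4 by simp
  then show ?thesis by (metis add.commute distrib_left mult.right_neutral)
qed

lemma F4: "k*k = k*(k-1) + k"
proof -
  have "k = (k-1) + 1" using k4 by simp
  then show ?thesis by (metis add.commute distrib_left mult.right_neutral)
qed

lemma F5: "k*(k+1) = k*k + k" by (simp add: algebra_simps)

lemma Wf1_iff: "Wf k x = 1 \<longleftrightarrow> (x < X \<and> k dvd x) \<or> x = X \<or> (X < x \<and> k dvd (x+2))"
  unfolding Wf_def by simp

lemma eq_k: "k dvd t \<Longrightarrow> 0 < t \<Longrightarrow> t < 2*k \<Longrightarrow> t = k"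
  using mult_between2[of k t 0] by (simp add: mult.commute)

lemma dvd_shift: "(k::nat) dvd a \<Longrightarrow> k dvd b \<Longrightarrow> b = a + t \<Longrightarrow> k dvd t"
  using dvd_add_right_iff by blast

lemma kX1: "k dvd (X + 1)" using F1 by simp

lemma ones_pair:
  assumes x: "Wf k x = 1" and y: "Wf k y = 1" and xy: "x < y" and b: "y - x + 3 \<le> 2*k"
  shows "(y - x = k \<and> (y < X \<or> X < x)) \<or> (y - x = k - 1 \<and> (x = X \<or> y = X))"
proof -
  have x': "(x < X \<and> k dvd x) \<or> x = X \<or> (X < x \<and> k dvd (x+2))" using x Wf1_iff by blast
  have y': "(y < X \<and> k dvd y) \<or> y = X \<or> (X < y \<and> k dvd (y+2))" using y Wf1_iff by blast
  show ?thesis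
  proof (cases "y < X")
    case True
    then have "x < X" "k dvd x" "k dvd y" using x' y' xy by auto
    then have "k dvd (y - x)" using dvd_diff_nat by blast
    then have "y - x = k" using eq_k xy b by simp
    then show ?thesis using True by simp
  next
    case yX: False
    show ?thesis
    proof (cases "y = X")
      case True
      then have "x < X" "k dvd x" using x' xy by auto
      have "X + 1 = x + ((y - x) + 1)" using True xy by simp
      then have "k dvd ((y - x) + 1)" using dvd_shift[OF \<open>k dvd x\<close> kX1] by blast
      then have "y - x + 1 = k" using eq_k b by simp
      then show ?thesis using True by simp
    next
      case False
      then have "X < y" "k dvd (y+2)" using y' yX by auto
      show ?thesis
      proof (cases "x < X")
        case True
        then have "k dvd x" using x' by auto
        have "y + 2 = x + ((y - x) + 2)" using xy by simp
        then have "k dvd ((y - x) + 2)" using dvd_shift[OF \<open>k dvd x\<close> \<open>k dvd (y+2)\<close>] by blast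
        then have "y - x + 2 = k" using eq_k b by simp
        then have "k*(k-2) < x" using F1 F2 \<open>X < y\<close> xy by linarith
        moreover have "x < k*(k-2+1)"
        proof -
          have "k - 2 + 1 = k - 1" using k4 by simp
          then show ?thesis using True F1 by simp
        qed
        ultimately show ?thesis using mult_between[OF \<open>k dvd x\<close>] by blast
      next
        case False
        show ?thesis
        proof (cases "x = X")
          case True
          have "y + 2 = (X + 1) + ((y - x) + 1)" using True xy by simp
          then have "k dvd ((y - x) + 1)" using dvd_shift[OF kX1 \<open>k dvd (y+2)\<close>] by blast
          then have "y - x + 1 = k" using eq_k b xy by simp
          then show ?thesis using True by simp
        next
          case False
          then have "X < x" "k dvd (x+2)" using x' \<open>\<not> x < X\<close> by auto
          have "y + 2 = (x + 2) + (y - x)" using xy by simp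
          then have "k dvd (y - x)" using dvd_shift[OF \<open>k dvd (x+2)\<close> \<open>k dvd (y+2)\<close>] by blast
          then have "y - x = k" using eq_k b xy by simp
          then show ?thesis using \<open>X < x\<close> by simp
        qed
      qed
    qed
  qed
qed


lemma window:
  assumes "x + k \<le> 2*X + 1"
  shows "\<exists>y. x \<le> y \<and> y < x + k \<and> Wf k y = 1"
proof -
  have k0: "0 < k" using k4 by simp
  show ?thesis
  proof (cases "x + k \<le> X")
    case True
    obtain q where q: "x \<le> k*q" "k*q < x + k" using mult_window[OF k0] by blast
    then have "Wf k (k*q) = 1" using True Wf1_iff by simp
    then show ?thesis using q by blast
  next
    case False
    show ?thesis
    proof (cases "x \<le> X")
      case True
      then show ?thesis using False Wf1_iff by (intro exI[of _ X]) auto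
    next
      case False
      obtain q where q: "x + 2 \<le> k*q" "k*q < x + 2 + k" using mult_window[OF k0] by blast
      define y where "y = k*q - 2"
      have "y + 2 = k*q" using q y_def by simp
      then have "Wf k y = 1" using False q Wf1_iff[of y] y_def by simp
      moreover have "x \<le> y" "y < x + k" using q y_def by simp_all
      ultimately show ?thesis by blast
    qed
  qed
qed

lemma same_left: "x + D < X \<Longrightarrow> k dvd D \<Longrightarrow> Wf k x = Wf k (x+D)"
  unfolding Wf_def by (auto simp: dvd_add_left_iff dvd_add_right_iff)

lemma same_right: "X < x \<Longrightarrow> k dvd D \<Longrightarrow> Wf k x = Wf k (x+D)"
proof -
  assume a: "X < x" "k dvd D"
  have "k dvd (x + D + 2) \<longleftrightarrow> k dvd (x + 2)"
    using a(2) by (metis add.commute add.left_commute dvd_add_right_iff)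
  then show ?thesis unfolding Wf_def using a(1) by auto
qed

lemma cross: "x < X \<Longrightarrow> X < x + D \<Longrightarrow> k dvd (D + 2) \<Longrightarrow> Wf k x = Wf k (x+D)"
proof -
  assume a: "x < X" "X < x + D" "k dvd (D + 2)"
  have "k dvd (x + D + 2) \<longleftrightarrow> k dvd x"
    using a(3) by (metis add.assoc dvd_add_left_iff)
  then show ?thesis unfolding Wf_def using a(1,2) by auto
qed

lemma central_char:
  assumes lo: "X + 3 \<le> y + 2*k" and hi: "y + 3 \<le> X + 2*k"
  shows "Wf k y = 1 \<longleftrightarrow> y + (k-1) = X \<or> y = X \<or> y = X + (k-1)"
proof
  assume "Wf k y = 1"
  then have y': "(y < X \<and> k dvd y) \<or> y = X \<or> (X < y \<and> k dvd (y+2))" using Wf1_iff by blast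
  show "y + (k-1) = X \<or> y = X \<or> y = X + (k-1)"
  proof -
    { assume a: "y < X" "k dvd y"
      have e1: "k - 3 + 2 = k - 1" "k - 3 + 1 = k - 2" using k4 by simp_all
      have "k*(k-3) < y" using lo F1 F2 F3 by linarith
      moreover have "y < k*(k-3+2)" using a F1 e1 by simp
      ultimately have "y = k*(k-3+1)" using mult_between2[OF a(2)] by blast
      then have "y = k*(k-2)" by (simp only: e1)
      then have "y + (k-1) = X" using F1 F2 k4 by linarith }
    moreover
    { assume a: "X < y" "k dvd (y+2)"
      have e1: "k - 1 + 2 = k + 1" "k - 1 + 1 = k" using k4 by simp_all
      have "k*(k-1) < y + 2" using a F1 by linarith
      moreover have "y + 2 < k*(k-1+2)" using hi F1 F4 F5 e1 by simp
      ultimately have "y + 2 = k*(k-1+1)" using mult_between2[OF a(2)] by blast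
      then have "y + 2 = k*k" by (simp only: e1)
      then have "y = X + (k-1)" using F1 F4 k4 by linarith }
    ultimately show ?thesis using y' by blast
  qed
next
  assume "y + (k-1) = X \<or> y = X \<or> y = X + (k-1)"
  moreover
  { assume a: "y + (k-1) = X"
    then have "y = k*(k-2)" using F1 F2 k4 by linarith
    moreover have "y < X" using a k4 by linarith
    ultimately have "Wf k y = 1" using Wf1_iff by simp }
  moreover
  { assume a: "y = X + (k-1)"
    then have "y + 2 = k*k" using F1 F4 k4 by linarith
    then have "k dvd (y+2)" by simp
    moreover have "X < y" using a k4 by linarith
    ultimately have "Wf k y = 1" using Wf1_iff by blast }
  ultimately show "Wf k y = 1" using Wf1_iff by blast
qed

lemma central:
  assumes lo: "X + 3 \<le> x + 2*k" and hi: "x + 2 \<le> X + k"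
  shows "Wf k x = Wf k (x + (k-1))"
proof -
  have c1: "Wf k x = 1 \<longleftrightarrow> x + (k-1) = X \<or> x = X \<or> x = X + (k-1)"
    using central_char lo hi by simp
  have c2: "Wf k (x + (k-1)) = 1 \<longleftrightarrow> x + (k-1) + (k-1) = X \<or> x + (k-1) = X \<or> x + (k-1) = X + (k-1)"
    using central_char[of "x + (k-1)"] lo hi k4 by simp
  have "Wf k x = 1 \<longleftrightarrow> Wf k (x + (k-1)) = 1" using c1 c2 lo hi k4 by linarith
  then show ?thesis using Wf01 by metis
qed

lemma ones_dist:
  assumes "Wf k x = 1" "Wf k y = 1" "x < y"
  shows "k - 1 \<le> y - x"
proof (cases "y - x + 3 \<le> 2*k")
  case True then show ?thesis using ones_pair[OF assms True] by auto
next
  case False then show ?thesis by simp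
qed


end


lemma NT:
  fixes k m :: nat
  assumes k4: "4 \<le> k" and km: "k \<le> m" and mk: "m + 3 \<le> 2*k"
  shows "\<exists>d. (k dvd d*m \<and> 1 \<le> d \<and> 2*d+2 \<le> k) \<or> (k dvd d*m + 2 \<and> 2 \<le> d \<and> d \<le> k - 1)"
proof -
  define g where "g = gcd m k"
  have g0: "0 < g" using k4 g_def by simp
  show ?thesis
  proof (cases "3 \<le> g")
    case True
    obtain d where kd: "k = g*d" using g_def by (metis gcd_dvd2 dvd_def)
    obtain m1 where md: "m = g*m1" using g_def by (metis gcd_dvd1 dvd_def)
    have "d*m = k*m1" using kd md by simp
    then have dv: "k dvd d*m" by simp
    have d1: "1 \<le> d" using kd k4 by (cases d) auto
    have "2*d+2 \<le> k"
    proof (cases "d = 1")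
      case True then show ?thesis using k4 by simp
    next
      case False
      then have "2 \<le> d" using d1 by simp
      moreover have "3*d \<le> g*d" using True by simp
      ultimately show ?thesis using kd by linarith
    qed
    then show ?thesis using dv d1 by blast
  next
    case False
    then have g12: "g = 1 \<or> g = 2" using g0 by auto
    define h :: int where "h = 2 div int g"
    have hg: "h * int g = 2" using g12 h_def by auto
    obtain u v :: int where uv: "u * int m + v * int k = int g"
      using bezout_int[of "int m" "int k"] g_def by auto
    define a where "a = -(h*u)"
    define dI where "dI = a mod int k"
    have k0: "0 < int k" using k4 by simp
    have dI0: "0 \<le> dI" "dI < int k" using dI_def k0 by simp_all
    define d where "d = nat dI"
    have dId: "int d = dI" using d_def dI0 by simp
    have adiv: "dI = a - int k * (a div int k)" using dI_def by (simp add: minus_div_mult_eq_mod[symmetric] mult.commute)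
    have "int d * int m + 2 = int k * (h*v - (a div int k) * int m)"
      using dId adiv a_def uv hg by algebra
    then have "int k dvd int d * int m + 2" by (metis dvd_triv_left)
    then have "int k dvd int (d*m + 2)" by (simp add: add.commute)
    then have dv: "k dvd d*m + 2" by (simp only: of_nat_dvd_iff)
    have dk: "d < k" using dI0 dId by linarith
    have dn0: "d \<noteq> 0"
    proof
      assume "d = 0"
      then have "k dvd 2" using dv by (metis add_0 mult_0)
      then have "k \<le> 2" by (rule dvd_imp_le) simp
      then show False using k4 by simp
    qed
    have dn1: "d \<noteq> 1"
    proof
      assume "d = 1"
      then have "k dvd m + 2" using dv by simp
      moreover have "k*1 < m + 2" using km by simp
      moreover have "m + 2 < k*(1+1)" using mk by simp
      ultimately show False using mult_between by blast
    qed
    have "k dvd d*m + 2 \<and> 2 \<le> d \<and> d \<le> k - 1" using dv dk dn0 dn1 by simp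
    then show ?thesis by blast
  qed
qed



lemma crossing:
  fixes f :: "nat \<Rightarrow> nat"
  shows "f 0 \<le> Y \<Longrightarrow> Y < f n \<Longrightarrow> \<exists>i<n. f i \<le> Y \<and> Y < f (Suc i)"
proof (induction n)
  case 0 then show ?case by simp
next
  case (Suc n)
  show ?case
  proof (cases "Y < f n")
    case True
    then obtain i where "i < n" "f i \<le> Y" "Y < f (Suc i)" using Suc by blast
    then show ?thesis by (intro exI[of _ i]) simp
  next
    case False
    then show ?thesis using Suc.prems by (intro exI[of _ n]) simp
  qed
qed

context
  fixes k :: nat
  assumes k4: "4 \<le> k"
begin

abbreviation "XX \<equiv> xz k"

lemma single_one:
  assumes m: "m \<le> k - 1"
  shows "\<exists>\<tau>\<le>m. \<forall>q<m. Wf k (t+q) = (if q = \<tau> then 1 else 0)"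
proof (cases "\<exists>q<m. Wf k (t+q) = 1")
  case True
  then obtain q1 where q1: "q1 < m" "Wf k (t+q1) = 1" by blast
  have "\<forall>q<m. Wf k (t+q) = (if q = q1 then 1 else 0)"
  proof (intro allI impI)
    fix q assume q: "q < m"
    show "Wf k (t+q) = (if q = q1 then 1 else 0)"
    proof (cases "q = q1")
      case True then show ?thesis using q1 by simp
    next
      case False
      have "Wf k (t+q) \<noteq> 1"
      proof
        assume w1: "Wf k (t+q) = 1"
        show False
        proof (cases "q < q1")
          case True
          then have "k - 1 \<le> (t+q1) - (t+q)" using ones_dist[OF k4 w1 q1(2)] by simp
          then show False using q1 q m True by linarith
        next
          case False
          then have "q1 < q" using \<open>q \<noteq> q1\<close> by simp
          then have "k - 1 \<le> (t+q) - (t+q1)" using ones_dist[OF k4 q1(2) w1] by simp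
          then show False using q1 q m \<open>q1 < q\<close> by linarith
        qed
      qed
      then show ?thesis using False Wf01 by simp
    qed
  qed
  then show ?thesis using q1 by (intro exI[of _ q1]) simp
next
  case False
  then have "\<forall>q<m. Wf k (t+q) = (if q = m then 1 else 0)" using Wf01 by auto
  then show ?thesis by (intro exI[of _ m]) simp
qed

lemma anti_small:
  assumes m: "m + 2 \<le> k"
  shows "\<exists>r r'. r < r' \<and> r' < k \<and> (\<forall>q<m. Wf k (s + r*m + q) = Wf k (s + r'*m + q))"
proof -
  have "\<forall>r\<in>{..<k}. \<exists>\<tau>. \<tau> \<le> m \<and> (\<forall>q<m. Wf k (s + r*m + q) = (if q = \<tau> then 1 else 0))"
    using single_one m by auto
  from bchoice[OF this] obtain T where T: "\<forall>r\<in>{..<k}. T r \<le> m \<and> (\<forall>q<m. Wf k (s + r*m + q) = (if q = T r then 1 else 0))"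
    by blast
  have "T ` {..<k} \<subseteq> {..m}" using T by auto
  then have "card (T ` {..<k}) \<le> m + 1" using card_mono[of "{..m}"] by fastforce
  then have "\<not> inj_on T {..<k}" using pigeonhole[of T "{..<k}"] m by simp
  then obtain r1 r2 where r12: "r1 < k" "r2 < k" "r1 \<noteq> r2" "T r1 = T r2"
    by (auto simp: inj_on_def)
  have eqb: "\<forall>q<m. Wf k (s + r1*m + q) = Wf k (s + r2*m + q)" using T r12 by simp
  show ?thesis
  proof (cases "r1 < r2")
    case True then show ?thesis using r12 eqb by blast
  next
    case False then have "r2 < r1" using r12 by simp
    then show ?thesis using r12 eqb by metis
  qed
qed

lemma anti_km1:
  assumes sb: "s + k*(k-1) \<le> 2*XX + 1"
  shows "\<exists>r r'. r < r' \<and> r' < k \<and> (\<forall>q<k-1. Wf k (s + r*(k-1) + q) = Wf k (s + r'*(k-1) + q))"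
proof -
  define m where "m = k - 1"
  have m0: "0 < m" using k4 m_def by simp
  have X1: "XX + 1 = k*m" using F1[OF k4] m_def by simp
  have sX: "s \<le> XX" using sb X1 m_def by simp
  define c where "c = (XX - s) div m"
  have cm: "c*m \<le> XX - s" "XX - s < c*m + m"
  proof -
    have e: "c*m + (XX - s) mod m = XX - s" using c_def by simp
    have "(XX - s) mod m < m" using m0 by simp
    then show "c*m \<le> XX - s" "XX - s < c*m + m" using e by linarith+
  qed
  show ?thesis
  proof (cases "c = 0")
    case True
    have "\<forall>q<m. Wf k (s + 0*m + q) = Wf k (s + 1*m + q)"
    proof (intro allI impI)
      fix q assume q: "q < m"
      have c0: "c*m = 0" using True by simp
      have p1: "XX + 3 \<le> (s + q) + 2*k" using cm c0 m_def sX k4 by linarith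
      have p2: "(s + q) + 2 \<le> XX + k" using cm c0 m_def sX k4 q by linarith
      have A: "Wf k (s + q) = Wf k (s + q + (k-1))"
        using central[OF k4 p1 p2] .
      have B: "s + 1*m + q = s + q + (k-1)" using m_def by simp
      show "Wf k (s + 0*m + q) = Wf k (s + 1*m + q)" unfolding B using A by simp
    qed
    then show ?thesis using k4 m_def by (intro exI[of _ 0] exI[of _ 1]) simp
  next
    case False
    then have c1: "c*m = (c-1)*m + m" by (cases c) auto
    have ck: "c < k"
    proof -
      have "c*m < k*m" using cm X1 by linarith
      then show ?thesis by simp
    qed
    have "\<forall>q<m. Wf k (s + (c-1)*m + q) = Wf k (s + c*m + q)"
    proof (intro allI impI)
      fix q assume q: "q < m"
      have p1: "XX + 3 \<le> (s + (c-1)*m + q) + 2*k" using cm c1 m_def sX k4 by linarith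
      have p2: "(s + (c-1)*m + q) + 2 \<le> XX + k" using cm c1 m_def sX k4 q by linarith
      have A: "Wf k (s + (c-1)*m + q) = Wf k (s + (c-1)*m + q + (k-1))"
        using central[OF k4 p1 p2] .
      have B: "s + c*m + q = s + (c-1)*m + q + (k-1)" using c1 m_def by simp
      show "Wf k (s + (c-1)*m + q) = Wf k (s + c*m + q)" unfolding B using A by simp
    qed
    then show ?thesis using ck False m_def by (intro exI[of _ "c-1"] exI[of _ c]) simp
  qed
qed

end


context
  fixes k :: nat
  assumes k4: "4 \<le> k"
begin

abbreviation "YY \<equiv> xz k"

lemma anti_big:
  assumes km: "k \<le> m" and sb: "s + k*m \<le> 2*YY + 1"
  shows "\<exists>r r'. r < r' \<and> r' < k \<and> (\<forall>q<m. Wf k (s + r*m + q) = Wf k (s + r'*m + q))"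
proof -
  have X1: "YY + 1 = k*(k-1)" using F1[OF k4] by simp
  have m0: "0 < m" using km k4 by simp
  have "k*m < k*(2*k-2)"
  proof -
    have "k*(2*k-2) = 2*(k*(k-1))" by (simp add: algebra_simps diff_mult_distrib2)
    then show ?thesis using sb X1 by linarith
  qed
  then have "m < 2*k - 2" by simp
  then have mk: "m + 3 \<le> 2*k" by simp
  have km1: "(k-1)*k \<le> (k-1)*m" using km by simp
  have kmsplit: "k*m = (k-1)*m + m" using k4 by (cases k) auto
  have cmm: "(k-1)*k = k*(k-1)" by (simp add: mult.commute)
  have sm: "s + m \<le> YY" using sb X1 km1 kmsplit cmm by linarith
  define c where "c = (YY - s) div m"
  have cm: "c*m \<le> YY - s" "YY - s < c*m + m"
  proof -
    have e: "c*m + (YY - s) mod m = YY - s" using c_def by simp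
    have "(YY - s) mod m < m" using m0 by simp
    then show "c*m \<le> YY - s" "YY - s < c*m + m" using e by linarith+
  qed
  have c1: "1 \<le> c"
  proof (rule ccontr)
    assume "\<not> 1 \<le> c" then have "c = 0" by simp
    then show False using cm sm by simp
  qed
  have ck: "c + 2 \<le> k"
  proof -
    have "YY < (k-1)*m" using X1 km1 cmm by linarith
    then have "c*m < (k-1)*m" using cm by linarith
    then have "c < k - 1" by simp
    then show ?thesis by simp
  qed
  have left: "s + r*m + q < YY" if "r + 1 \<le> c" "q < m" for r q
  proof -
    have "(r+1)*m \<le> c*m" using that mult_le_mono1 by blast
    moreover have "(r+1)*m = r*m + m" by simp
    ultimately show ?thesis using that cm by linarith
  qed
  have right: "YY < s + r*m + q" if "c + 1 \<le> r" for r q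
  proof -
    have "(c+1)*m \<le> r*m" using that mult_le_mono1 by blast
    moreover have "(c+1)*m = c*m + m" by simp
    ultimately show ?thesis using cm by linarith
  qed
  obtain d where d: "(k dvd d*m \<and> 1 \<le> d \<and> 2*d+2 \<le> k) \<or> (k dvd d*m + 2 \<and> 2 \<le> d \<and> d \<le> k - 1)"
    using NT[OF k4 km mk] by blast
  show ?thesis
  proof (cases "k dvd d*m \<and> 1 \<le> d \<and> 2*d+2 \<le> k")
    case True
    show ?thesis
    proof (cases "d + 1 \<le> c")
      case True2: True
      have "\<forall>q<m. Wf k (s + 0*m + q) = Wf k (s + d*m + q)"
      proof (intro allI impI)
        fix q assume q: "q < m"
        have "s + d*m + q < YY" using left[OF True2 q] .
        then have "(s + q) + d*m < YY" by simp
        then have A: "Wf k (s + q) = Wf k ((s + q) + d*m)" using same_left[OF k4] True by blast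
        have B: "s + d*m + q = (s + q) + d*m" by simp
        show "Wf k (s + 0*m + q) = Wf k (s + d*m + q)" unfolding B using A by simp
      qed
      then show ?thesis using True True2 ck by (intro exI[of _ 0] exI[of _ d]) auto
    next
      case False2: False
      have "\<forall>q<m. Wf k (s + (c+1)*m + q) = Wf k (s + (c+1+d)*m + q)"
      proof (intro allI impI)
        fix q assume q: "q < m"
        have "YY < s + (c+1)*m + q" using right[of "c+1"] by simp
        then have A: "Wf k (s + (c+1)*m + q) = Wf k ((s + (c+1)*m + q) + d*m)" using same_right[OF k4] True by blast
        have B: "s + (c+1+d)*m + q = (s + (c+1)*m + q) + d*m" by (simp add: algebra_simps)
        show "Wf k (s + (c+1)*m + q) = Wf k (s + (c+1+d)*m + q)" unfolding B by (rule A)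
      qed
      moreover have "c + 1 + d < k" using False2 True by linarith
      ultimately show ?thesis using True by (intro exI[of _ "c+1"] exI[of _ "c+1+d"]) auto
    qed
  next
    case False
    then have dB: "k dvd d*m + 2" "2 \<le> d" "d \<le> k - 1" using d by auto
    obtain r where r: "r + 1 \<le> c" "c + 1 \<le> r + d" "r + d < k"
    proof (cases "c - 1 + d \<le> k - 1")
      case True then show ?thesis using that[of "c-1"] c1 dB by simp
    next
      case False then show ?thesis using that[of "k-1-d"] c1 dB ck by simp
    qed
    have "\<forall>q<m. Wf k (s + r*m + q) = Wf k (s + (r+d)*m + q)"
    proof (intro allI impI)
      fix q assume q: "q < m"
      have a1: "s + r*m + q < YY" using left[OF r(1) q] .
      have a2: "YY < (s + r*m + q) + d*m"
      proof -
        have "YY < s + (r+d)*m + q" using right[OF r(2)] .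
        then show ?thesis by (simp add: algebra_simps)
      qed
      have A: "Wf k (s + r*m + q) = Wf k ((s + r*m + q) + d*m)" using cross[OF k4 a1 a2 dB(1)] .
      have B: "s + (r+d)*m + q = (s + r*m + q) + d*m" by (simp add: algebra_simps)
      show "Wf k (s + r*m + q) = Wf k (s + (r+d)*m + q)" unfolding B by (rule A)
    qed
    then show ?thesis using r dB by (intro exI[of _ r] exI[of _ "r+d"]) auto
  qed
qed

lemma anti_all:
  assumes sb: "s + k*m \<le> 2*YY + 1"
  shows "\<exists>r r'. r < r' \<and> r' < k \<and> (\<forall>q<m. Wf k (s + r*m + q) = Wf k (s + r'*m + q))"
proof -
  consider "m + 2 \<le> k" | "m = k - 1" | "k \<le> m" by linarith
  then show ?thesis
  proof cases
    case 1 then show ?thesis using anti_small[OF k4] by blast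
  next
    case 2 then show ?thesis using anti_km1[OF k4] sb by blast
  next
    case 3 then show ?thesis using anti_big sb by blast
  qed
qed

end


context
  fixes k :: nat
  assumes k4: "4 \<le> k"
begin

abbreviation "ZZ \<equiv> xz k"

lemma no_power:
  assumes p1: "1 \<le> p" and sb: "s + k*p \<le> 2*ZZ + 1"
    and per: "\<forall>q<k*p. Wf k (s+q) = Wf k (s + q mod p)"
  shows False
proof -
  have X1: "ZZ + 1 = k*(k-1)" using F1[OF k4] by simp
  have "k*p < k*(2*k-2)"
  proof -
    have "k*(2*k-2) = 2*(k*(k-1))" by (simp add: algebra_simps diff_mult_distrib2)
    then show ?thesis using sb X1 by linarith
  qed
  then have "p < 2*k - 2" by simp
  then have pk: "p + 3 \<le> 2*k" by simp
  have kkp: "k \<le> k*p" using p1 by simp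
  obtain y where y: "s \<le> y" "y < s + k" "Wf k y = 1" using window[OF k4, of s] sb kkp by auto
  define b where "b = s + (y - s) mod p"
  have p0: "0 < p" using p1 by simp
  have ones: "Wf k (b + i*p) = 1" if i: "i < k" for i
  proof -
    have r: "(y - s) mod p < p" using p0 by simp
    have "(i+1)*p \<le> k*p" using i mult_le_mono1[of "i+1" k p] by simp
    then have lt: "(y - s) mod p + i*p < k*p" using r by simp
    have "Wf k (b + i*p) = Wf k (s + ((y - s) mod p + i*p))" using b_def by (simp add: add.assoc)
    also have "\<dots> = Wf k (s + ((y - s) mod p + i*p) mod p)" using per lt by blast
    also have "((y - s) mod p + i*p) mod p = (y - s) mod p" by simp
    also have "Wf k (s + (y - s) mod p) = Wf k (s + (y - s))"
    proof -
      have "y - s < k*p" using y kkp by linarith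
      then show ?thesis using per by metis
    qed
    also have "\<dots> = 1" using y by simp
    finally show ?thesis .
  qed
  have pairs: "(p = k \<and> (b + (i+1)*p < ZZ \<or> ZZ < b + i*p)) \<or> (p = k - 1 \<and> (b + i*p = ZZ \<or> b + (i+1)*p = ZZ))"
    if i: "i + 1 < k" for i
  proof -
    have o1: "Wf k (b + i*p) = 1" using ones i by simp
    have o2: "Wf k (b + (i+1)*p) = 1" using ones i by blast
    have lt: "b + i*p < b + (i+1)*p" using p0 by simp
    have df: "b + (i+1)*p - (b + i*p) = p" by simp
    show ?thesis using ones_pair[OF k4 o1 o2 lt] df pk by simp
  qed
  have last: "b + (k-1)*p < s + k*p"
  proof -
    have "(y - s) mod p < p" using p0 by simp
    moreover have "k*p = (k-1)*p + p" using k4 by (cases k) auto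
    ultimately show ?thesis using b_def by linarith
  qed
  show False
  proof (cases "p = k")
    case True
    have P: "b + (i+1)*k < ZZ \<or> ZZ < b + i*k" if "i + 1 < k" for i
      using pairs[OF that] True k4 by auto
    have kk: "(k-1)*k = k*(k-1)" by (simp add: mult.commute)
    show False
    proof (cases "ZZ < b")
      case True
      have "ZZ + (k-1)*k < b + (k-1)*p" using True \<open>p = k\<close> by simp
      then show False using last sb X1 kk \<open>p = k\<close> by linarith
    next
      case False
      have "(k-1)*k \<le> b + (k-1)*k" by simp
      then have "ZZ < b + (k-1)*k" using X1 kk by linarith
      then obtain i where i: "i < k-1" "b + i*k \<le> ZZ" "ZZ < b + (Suc i)*k"
        using crossing[of "\<lambda>i. b + i*k" ZZ "k-1"] False by auto
      have "i + 1 < k" using i by simp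
      then have "b + (i+1)*k < ZZ \<or> ZZ < b + i*k" using P by blast
      moreover have "(i+1)*k = k + i*k" "(Suc i)*k = k + i*k" by simp_all
      ultimately show False using i by linarith
    qed
  next
    case False
    then have pk1: "p = k - 1" using pairs[of 0] k4 by auto
    have A: "b = ZZ \<or> b + p = ZZ" using pairs[of 0] k4 pk1 False by auto
    have B: "b + 2*p = ZZ \<or> b + 3*p = ZZ" using pairs[of 2] k4 pk1 False by (auto simp: numeral_eq_Suc)
    show False using A B p0 by linarith
  qed
qed

end


lemma lower_bad:
  assumes k4: "4 \<le> k" and a2: "2 \<le> alpha" and N: "N < 2*k^2 - 2*k"
  shows "\<not> good_length alpha k N"
proof
  assume g: "good_length alpha k N"
  define w where "w = map (Wf k) [0..<N]"
  have X1: "xz k + 1 = k*(k-1)" using F1[OF k4] by simp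
  have "2*k^2 - 2*k = 2*(k*(k-1))" by (simp add: power2_eq_square algebra_simps diff_mult_distrib2)
  then have NX: "N \<le> 2*xz k + 1" using N X1 by linarith
  have lw: "length w = N" using w_def by simp
  have "set w \<subseteq> {0..<alpha}"
  proof
    fix a assume "a \<in> set w"
    then obtain x where "a = Wf k x" using w_def by auto
    then have "a \<le> 1" unfolding Wf_def by simp
    then show "a \<in> {0..<alpha}" using a2 by simp
  qed
  then obtain v where fac: "is_factor v w" and pa: "is_k_power k v \<or> is_k_anti_power k v"
    using g lw unfolding good_length_def by blast
  obtain s where s: "s + length v \<le> length w" "\<forall>q<length v. v!q = w!(s+q)"
    using factor_nth[OF fac] by blast
  have vW: "v!q = Wf k (s+q)" if "q < length v" for q
    using s that w_def lw by simp
  show False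
  proof (cases "is_k_power k v")
    case True
    then obtain u where u: "u \<noteq> []" "v = concat (replicate k u)" unfolding is_k_power_def by blast
    define p where "p = length u"
    have p1: "1 \<le> p" using u p_def by (cases u) auto
    have lv: "length v = k*p" using u p_def length_concat_replicate by metis
    have per: "\<forall>q<k*p. Wf k (s+q) = Wf k (s + q mod p)"
    proof (intro allI impI)
      fix q assume q: "q < k*p"
      have qm: "q mod p < k*p" using q p1 by (meson le_less_trans mod_le_divisor order.strict_trans1 zero_less_iff_neq_zero not_one_le_zero mod_less_eq_dividend)
      have "Wf k (s+q) = v!q" using vW q lv by simp
      also have "\<dots> = u!(q mod p)" using u concat_replicate_nth[of q k u] q p_def by simp
      also have "\<dots> = v!(q mod p)" using u concat_replicate_nth[of "q mod p" k u] qm p_def by simp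
      also have "\<dots> = Wf k (s + q mod p)" using vW qm lv by simp
      finally show "Wf k (s+q) = Wf k (s + q mod p)" .
    qed
    have "s + k*p \<le> 2*xz k + 1" using s lv lw NX by simp
    then show False using no_power[OF k4 p1 _ per] by blast
  next
    case False
    then have "is_k_anti_power k v" using pa by blast
    then obtain m where lv: "length v = k*m"
      and dist: "\<forall>i<k. \<forall>j<k. i \<noteq> j \<longrightarrow> take m (drop (i*m) v) \<noteq> take m (drop (j*m) v)"
      unfolding is_k_anti_power_def by blast
    have "s + k*m \<le> 2*xz k + 1" using s lv lw NX by simp
    then obtain r r' where rr: "r < r'" "r' < k" "\<forall>q<m. Wf k (s + r*m + q) = Wf k (s + r'*m + q)"
      using anti_all[OF k4] by blast
    have br: "(r+1)*m \<le> length v" using rr lv mult_le_mono1[of "r+1" k m] by simp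
    have br': "(r'+1)*m \<le> length v" using rr lv mult_le_mono1[of "r'+1" k m] by simp
    have "take m (drop (r*m) v) = take m (drop (r'*m) v)"
    proof (rule nth_equalityI)
      show "length (take m (drop (r*m) v)) = length (take m (drop (r'*m) v))"
        using block_length[OF br] block_length[OF br'] by simp
    next
      fix q assume "q < length (take m (drop (r*m) v))"
      then have q: "q < m" using block_length[OF br] by simp
      have "take m (drop (r*m) v) ! q = v ! (r*m + q)" using block_nth[OF br q] .
      also have "\<dots> = Wf k (s + r*m + q)" using vW br q by (simp add: add.assoc)
      also have "\<dots> = Wf k (s + r'*m + q)" using rr q by simp
      also have "\<dots> = v ! (r'*m + q)" using vW br' q by (simp add: add.assoc)
      also have "\<dots> = take m (drop (r'*m) v) ! q" using block_nth[OF br' q] by simp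
      finally show "take m (drop (r*m) v) ! q = take m (drop (r'*m) v) ! q" .
    qed
    then show False using dist rr by auto
  qed
qed

theorem theorem5p1:
  fixes alpha k :: nat
  assumes "alpha \<ge> 2" and "k > 3"
  shows "(\<exists>N>0. good_length alpha k N) \<and>
         2*k^2 - 2*k \<le> N_alpha alpha k \<and>
         N_alpha alpha k \<le> (k^3 - k^2 + k) * (k choose 2)"
proof -
  have k4: "4 \<le> k" using assms by simp
  define N0 where "N0 = (k^3 - k^2 + k) * (k choose 2)"
  have c0: "0 < k choose 2" using k4 by simp
  have "k \<le> k^3 - k^2 + k" by simp
  then have kp: "0 < k^3 - k^2 + k" using k4 by linarith
  have N0pos: "0 < N0" unfolding N0_def using kp c0 by (rule mult_pos_pos)
  have gN0: "good_length alpha k N0" using upper_good[of k alpha] k4 N0_def by simp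
  have ex: "\<exists>N>0. good_length alpha k N" using N0pos gN0 by blast
  have le: "N_alpha alpha k \<le> N0"
    unfolding N_alpha_def using N0pos gN0 by (intro Least_le) simp
  have L: "0 < N_alpha alpha k \<and> good_length alpha k (N_alpha alpha k)"
    unfolding N_alpha_def by (rule LeastI[of _ N0]) (use N0pos gN0 in simp)
  have ge: "2*k^2 - 2*k \<le> N_alpha alpha k"
  proof (rule ccontr)
    assume "\<not> 2*k^2 - 2*k \<le> N_alpha alpha k"
    then have "N_alpha alpha k < 2*k^2 - 2*k" by simp
    then show False using lower_bad[OF k4 assms(1)] L by blast
  qed
  show ?thesis using ex ge le N0_def by simp
qed


end
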